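(* Let $-1\le\alpha\le1$ and $t\ge0$. For all $(x,y)\in\mathbb{R}^2$ with $(x,y)\notin\{0\}\times2\pi\mathbb{Z}$, the function $t\mapsto W_{\alpha,t}(x,y)-\frac t2$ is non-increasing on $[0,\infty)$, equals $W_\alpha(x,y)$ at $t=0$, and consequently $$W_\alpha(x,y)\ \ge\ W_{\alpha,t}(x,y)-\frac t2\qquad\text{for all }t\ge0.$$
   Context: For $-1\le\alpha\le1$ and $(x,y)\in\mathbb{R}^2$ with $\cosh x-\cos y>0$, define $$W_\alpha(x,y)=\frac12\left[\frac{\alpha\,x\sinh x}{\cosh x-\cos y}-\log\big(2(\cosh x-\cos y)\big)+(1-\alpha)|x|\right],$$ and for $t\ge0$ and $(x,y)$ with $\cosh(|x|+t)-\cos y>0$, $$W_{\alpha,t}(x,y)=\frac{\alpha|x|\sinh(|x|+t)}{2(\cosh(|x|+t)-\cos y)}-\frac12\log\big(2(\cosh(|x|+t)-\cos y)\big)+\frac t2+\frac{1-\alpha}2|x|.$$ *)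

theory Defs
  imports Complex_Main
begin

text \<open>W_alpha(x,y), meaningful when cosh x - cos y > 0.\<close>
definition W :: "real \<Rightarrow> real \<Rightarrow> real \<Rightarrow> real" where
  "W \<alpha> x y = (1/2) * (\<alpha> * x * sinh x / (cosh x - cos y)
       - ln (2 * (cosh x - cos y)) + (1 - \<alpha>) * \<bar>x\<bar>)"

text \<open>W_{alpha,t}(x,y), meaningful when cosh(|x|+t) - cos y > 0.\<close>
definition Wt :: "real \<Rightarrow> real \<Rightarrow> real \<Rightarrow> real \<Rightarrow> real" where
  "Wt \<alpha> t x y = \<alpha> * \<bar>x\<bar> * sinh (\<bar>x\<bar> + t) / (2 * (cosh (\<bar>x\<bar> + t) - cos y))
       - (1/2) * ln (2 * (cosh (\<bar>x\<bar> + t) - cos y)) + t / 2 + ((1 - \<alpha>) / 2) * \<bar>x\<bar>"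

end

theory Submission
  imports Defs
begin

lemma le_sinh: "0 \<le> (u::real) \<Longrightarrow> u \<le> sinh u"
proof -
  assume u: "0 \<le> u"
  have "(\<lambda>v. sinh v - v) 0 \<le> (\<lambda>v. sinh v - v) u"
  proof (rule DERIV_nonneg_imp_nondecreasing[OF u])
    fix v :: real
    have "((\<lambda>v. sinh v - v) has_real_derivative cosh v - 1) (at v)"
      by (auto intro!: derivative_eq_intros)
    then show "\<exists>y. ((\<lambda>v. sinh v - v) has_real_derivative y) (at v) \<and> y \<ge> 0"
      using cosh_real_ge_1[of v] by auto
  qed
  then show ?thesis by simp
qed

lemma key_ineq:
  fixes \<alpha> a c u :: real
  assumes "-1 \<le> \<alpha>" "\<alpha> \<le> 1" "0 \<le> a" "a \<le> u" "-1 \<le> c" "c \<le> 1"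
  shows "\<alpha> * a * (1 - c * cosh u) \<le> sinh u * (cosh u - c)"
proof -
  have ch: "cosh u \<ge> 1" by (rule cosh_real_ge_1)
  have sh: "a \<le> sinh u" using le_sinh[of u] assms by linarith
  have d: "cosh u - c \<ge> 0" using ch assms by linarith
  have A: "\<bar>1 - c * cosh u\<bar> \<le> cosh u - c"
  proof -
    have "(1 + c) * 1 \<le> (1 + c) * cosh u" using ch assms by (intro mult_left_mono) auto
    moreover have "(1 - c) * (cosh u + 1) \<ge> 0" using ch assms by auto
    ultimately show ?thesis by (auto simp: abs_if algebra_simps)
  qed
  have "\<alpha> * a * (1 - c * cosh u) \<le> \<bar>\<alpha> * a * (1 - c * cosh u)\<bar>" by simp
  also have "\<dots> = \<bar>\<alpha>\<bar> * a * \<bar>1 - c * cosh u\<bar>" using assms by (simp add: abs_mult)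
  also have "\<dots> \<le> 1 * a * \<bar>1 - c * cosh u\<bar>"
    using assms by (intro mult_right_mono) auto
  also have "\<dots> \<le> sinh u * (cosh u - c)"
    using A sh assms d by (simp add: mult_mono)
  finally show ?thesis .
qed

theorem mainTheorem6:
  fixes \<alpha> x y :: real
  assumes "-1 \<le> \<alpha>" and "\<alpha> \<le> 1"
    and "\<not> (x = 0 \<and> (\<exists>k::int. y = 2 * pi * of_int k))"
  shows "(\<forall>s t. 0 \<le> s \<longrightarrow> s \<le> t \<longrightarrow> Wt \<alpha> t x y - t / 2 \<le> Wt \<alpha> s x y - s / 2)
       \<and> Wt \<alpha> 0 x y = W \<alpha> x y
       \<and> (\<forall>t\<ge>0. W \<alpha> x y \<ge> Wt \<alpha> t x y - t / 2)"
proof -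
  define a where "a = \<bar>x\<bar>"
  define c where "c = cos y"
  have a0: "0 \<le> a" by (simp add: a_def)
  have c1: "-1 \<le> c" "c \<le> 1" by (auto simp: c_def)
  define g where "g u = \<alpha> * a * sinh u / (2 * (cosh u - c)) - (1/2) * ln (2 * (cosh u - c))" for u
  have pos: "cosh u - c > 0" if "a \<le> u" for u
  proof (cases "u = 0")
    case True
    then have "x = 0" using that a0 by (simp add: a_def)
    then have "c \<noteq> 1" using assms(3) cos_one_2pi_int[of y] by (auto simp: c_def mult_ac)
    then show ?thesis using True c1 by simp
  next
    case False
    then have "cosh u \<noteq> 1" by simp
    then have "cosh u > 1" using cosh_real_ge_1[of u] by linarith
    then show ?thesis using c1 by linarith
  qed
  have Wt_eq: "Wt \<alpha> t x y - t / 2 = g (a + t) + ((1 - \<alpha>) / 2) * a" for t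
    by (simp add: Wt_def g_def a_def c_def)
  have mono: "g (a + t) \<le> g (a + s)" if "0 \<le> s" "s \<le> t" for s t
  proof (rule DERIV_nonpos_imp_nonincreasing[of "a + s" "a + t" g])
    show "a + s \<le> a + t" using that by simp
    fix u assume u: "a + s \<le> u" "u \<le> a + t"
    then have au: "a \<le> u" using that by simp
    have D: "cosh u - c > 0" using pos[OF au] .
    have der: "(g has_real_derivative
        (\<alpha> * a * cosh u * (2 * (cosh u - c)) - \<alpha> * a * sinh u * (2 * sinh u)) / (2 * (cosh u - c))^2
        - (1/2) * ((2 * sinh u) / (2 * (cosh u - c)))) (at u)"
    proof -
      have n1: "2 * (cosh u - c) \<noteq> 0" "cosh u - c \<noteq> 0" using D by auto
      show ?thesis unfolding g_def using D
        apply (intro derivative_eq_intros refl)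
        apply (auto simp: n1)
        apply (simp add: n1 field_simps)
         apply (simp add: power2_eq_square algebra_simps)
        apply (simp add: n1 field_simps)
        done
    qed
    have eq: "(\<alpha> * a * cosh u * (2 * (cosh u - c)) - \<alpha> * a * sinh u * (2 * sinh u)) / (2 * (cosh u - c))^2
        - (1/2) * ((2 * sinh u) / (2 * (cosh u - c)))
      = (\<alpha> * a * (1 - c * cosh u) - sinh u * (cosh u - c)) / (2 * (cosh u - c)^2)"
    proof -
      have cs: "cosh u * cosh u = sinh u * sinh u + 1" using cosh_square_eq[of u] by (simp add: power2_eq_square)
      define d where "d = cosh u - c"
      have dn: "d \<noteq> 0" using D by (simp add: d_def)
      have gen: "\<And>A B S. (A * (2 * d) - B * 2) / (2 * d)^2 - (1/2) * ((2 * S) / (2 * d))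
          = (A * d - B - S * d) / (2 * d^2)"
        using dn by (simp add: field_simps power2_eq_square)
      have k: "\<alpha> * a * cosh u * d - \<alpha> * a * sinh u * sinh u = \<alpha> * a * (1 - c * cosh u)"
        using cs by (simp add: d_def algebra_simps)
      show ?thesis
        using gen[of "\<alpha> * a * cosh u" "\<alpha> * a * sinh u * sinh u" "sinh u"] k
        unfolding d_def[symmetric] by (simp add: mult_ac)
    qed
    have "\<alpha> * a * (1 - c * cosh u) - sinh u * (cosh u - c) \<le> 0"
      using key_ineq[OF assms(1,2) a0 au c1] by simp
    then have "(\<alpha> * a * (1 - c * cosh u) - sinh u * (cosh u - c)) / (2 * (cosh u - c)^2) \<le> 0"
      by (simp add: divide_nonpos_nonneg)
    then show "\<exists>y. (g has_real_derivative y) (at u) \<and> y \<le> 0" using der eq by metis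
  qed
  have P1: "\<forall>s t. 0 \<le> s \<longrightarrow> s \<le> t \<longrightarrow> Wt \<alpha> t x y - t / 2 \<le> Wt \<alpha> s x y - s / 2"
    using mono by (simp add: Wt_eq)
  have P2: "Wt \<alpha> 0 x y = W \<alpha> x y"
  proof -
    have "x * sinh x = \<bar>x\<bar> * sinh \<bar>x\<bar>" by (cases "x \<ge> 0") auto
    moreover have "cosh \<bar>x\<bar> = cosh x" by simp
    moreover have "cosh x - cos y \<noteq> 0" using pos[of a] by (simp add: a_def c_def)
    ultimately show ?thesis unfolding Wt_def W_def
      by (simp add: field_simps mult.assoc)
  qed
  have P3: "\<forall>t\<ge>0. W \<alpha> x y \<ge> Wt \<alpha> t x y - t / 2"
    using P1 P2 by (metis order_refl diff_zero div_0)
  show ?thesis using P1 P2 P3 by blast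
qed

end
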